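(* For every integer $k\ge 1$, the number of unlabeled connected $k$-vertex graphs with at most $k-1+\frac{k}{\ln k}$ edges is less than $100^k$.
   Context: Graphs are finite and simple; unlabeled means counted up to isomorphism. For $k=1$ the quantity $k/\ln k$ is interpreted as imposing no constraint beyond $k-1=0$ edges (the only graph is the single vertex). *)

theory Defs
  imports Complex_Main
begin

definition simple_graphs :: "nat \<Rightarrow> nat set set set" where
  "simple_graphs k = {E. \<forall>e\<in>E. e \<subseteq> {0..<k} \<and> card e = 2}"

definition adj :: "nat set set \<Rightarrow> (nat \<times> nat) set" where
  "adj E = {(u, v). {u, v} \<in> E}"

definition graph_connected :: "nat \<Rightarrow> nat set set \<Rightarrow> bool" where
  "graph_connected k E \<longleftrightarrow> (\<forall>u\<in>{0..<k}. \<forall>v\<in>{0..<k}. (u, v) \<in> (adj E)\<^sup>*)"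

definition graph_iso :: "nat \<Rightarrow> nat set set \<Rightarrow> nat set set \<Rightarrow> bool" where
  "graph_iso k E E' \<longleftrightarrow>
     (\<exists>f. bij_betw f {0..<k} {0..<k} \<and> E' = (\<lambda>e. f ` e) ` E)"

text \<open>Connected labeled graphs on k vertices with at most k - 1 + k / ln k edges.
  Note: for k = 1, ln 1 = 0 and division by zero is 0, so the bound is 0 edges.\<close>
definition sparse_connected :: "nat \<Rightarrow> nat set set set" where
  "sparse_connected k = {E \<in> simple_graphs k. graph_connected k E \<and>
       real (card E) \<le> real k - 1 + real k / ln (real k)}"

definition num_unlabeled_sparse_connected :: "nat \<Rightarrow> nat" where
  "num_unlabeled_sparse_connected k =
     card (sparse_connected k //
           {(E, E'). E \<in> sparse_connected k \<and> E' \<in> sparse_connected k \<and> graph_iso k E E'})"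

end

theory Submission
  imports Defs
begin

lemma boundary:
  assumes "(a,b) \<in> R\<^sup>*" "a \<in> S" "b \<notin> S"
  shows "\<exists>x y. (x,y) \<in> R \<and> x \<in> S \<and> y \<notin> S"
  using assms
proof (induction rule: rtrancl_induct)
  case base then show ?case by simp
next
  case (step y z)
  then show ?case by (cases "y \<in> S") auto
qed

lemma geo_bound0:
  fixes M :: nat
  assumes M: "M \<ge> 2"
  shows "(\<Sum>j\<le>s. M ^ j) \<le> 2 * M ^ s"
proof (induction s)
  case 0 then show ?case by simp
next
  case (Suc s)
  have h: "2 * M ^ s \<le> M ^ Suc s" using M by (simp add: mult_right_mono)
  have "(\<Sum>j\<le>Suc s. M ^ j) = (\<Sum>j\<le>s. M ^ j) + M ^ Suc s" by (rule sum.atMost_Suc)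
  then show ?case using Suc.IH h by linarith
qed

lemma geo_bound:
  fixes M :: nat
  assumes "M \<ge> 2 \<or> s = 0"
  shows "(\<Sum>j\<le>s. M ^ j) \<le> 2 * M ^ s"
  using assms geo_bound0 by auto

definition Pairs :: "nat \<Rightarrow> nat set set" where
  "Pairs k = {e. e \<subseteq> {0..<k} \<and> card e = 2}"

lemma Pairs_card: "card (Pairs k) \<le> k^2" "finite (Pairs k)"
proof -
  have sub: "Pairs k \<subseteq> (\<lambda>(a,b). {a,b}) ` ({0..<k} \<times> {0..<k})"
  proof
    fix e assume "e \<in> Pairs k"
    then have "e \<subseteq> {0..<k}" "card e = 2" by (auto simp: Pairs_def)
    then obtain a b where "e = {a,b}" by (auto simp: card_2_iff)
    with \<open>e \<subseteq> {0..<k}\<close> show "e \<in> (\<lambda>(a,b). {a,b}) ` ({0..<k} \<times> {0..<k})" by auto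
  qed
  show "finite (Pairs k)" by (rule finite_subset[OF sub]) auto
  have "card (Pairs k) \<le> card ((\<lambda>(a,b). {a,b}) ` ({0..<k} \<times> {0..<k}))"
    by (rule card_mono[OF _ sub]) auto
  also have "\<dots> \<le> card ({0..<k} \<times> {0..<k})" by (rule card_image_le) auto
  finally show "card (Pairs k) \<le> k^2" by (simp add: power2_eq_square)
qed

lemma Xs_card:
  assumes "k \<ge> 2 \<or> s = 0"
  shows "card {X. X \<subseteq> Pairs k \<and> card X \<le> s} \<le> 2 * (k^2)^s"
    "finite {X. X \<subseteq> Pairs k \<and> card X \<le> s}"
proof -
  have fin: "finite (Pairs k)" by (rule Pairs_card)
  show "finite {X. X \<subseteq> Pairs k \<and> card X \<le> s}"
    by (rule finite_subset[of _ "Pow (Pairs k)"]) (use fin in auto)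
  have eq: "{X. X \<subseteq> Pairs k \<and> card X \<le> s} = (\<Union>j\<in>{..s}. {X. X \<subseteq> Pairs k \<and> card X = j})"
    by auto
  have "card {X. X \<subseteq> Pairs k \<and> card X \<le> s} \<le> (\<Sum>j\<le>s. card {X. X \<subseteq> Pairs k \<and> card X = j})"
    unfolding eq by (rule card_UN_le) simp
  also have "\<dots> \<le> (\<Sum>j\<le>s. (k^2)^j)"
  proof (rule sum_mono)
    fix j
    have "card {X. X \<subseteq> Pairs k \<and> card X = j} = card (Pairs k) choose j"
      using n_subsets[OF fin] by simp
    also have "\<dots> \<le> card (Pairs k) ^ j"
      by (cases "j \<le> card (Pairs k)") (auto simp: binomial_le_pow binomial_eq_0)
    also have "\<dots> \<le> (k^2)^j" by (rule power_mono) (use Pairs_card in auto)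
    finally show "card {X. X \<subseteq> Pairs k \<and> card X = j} \<le> (k^2)^j" .
  qed
  also have "\<dots> \<le> 2 * (k^2)^s"
  proof (rule geo_bound)
    show "2 \<le> k^2 \<or> s = 0" using assms
    proof
      assume "k \<ge> 2" then have "k^2 \<ge> 2^2" by (rule power_mono) simp
      then show ?thesis by simp
    qed simp
  qed
  finally show "card {X. X \<subseteq> Pairs k \<and> card X \<le> s} \<le> 2 * (k^2)^s" .
qed


definition Fk :: "nat \<Rightarrow> (nat \<Rightarrow> nat) set" where
  "Fk k = {p. p 0 = 0 \<and> (\<forall>i. k \<le> i \<longrightarrow> p i = 0) \<and> (\<forall>i. 1 \<le> i \<longrightarrow> i < k \<longrightarrow> p i < i)
     \<and> (\<forall>i j. i \<le> j \<longrightarrow> j < k \<longrightarrow> p i \<le> p j)}"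

lemma Fk_strict:
  assumes "p \<in> Fk k"
  shows "sorted_wrt (<) (map (\<lambda>i. p i + i) [0..<k])"
proof -
  have "p i + i < p j + j" if "i < j" "j < k" for i j
  proof -
    have "p i \<le> p j" using assms that unfolding Fk_def by simp
    then show ?thesis using that by linarith
  qed
  then show ?thesis by (auto simp: sorted_wrt_iff_nth_less)
qed

lemma Fk_card: "card (Fk k) \<le> 4 ^ k" "finite (Fk k)"
proof -
  let ?enc = "\<lambda>p. (\<lambda>i. p i + i) ` {0..<k}"
  have inj: "inj_on ?enc (Fk k)"
  proof (rule inj_onI)
    fix p q assume p: "p \<in> Fk k" and q: "q \<in> Fk k" and e: "?enc p = ?enc q"
    have sp: "sorted (map (\<lambda>i. p i + i) [0..<k])" "distinct (map (\<lambda>i. p i + i) [0..<k])"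
      using Fk_strict[OF p] by (auto simp: strict_sorted_iff)
    have sq: "sorted (map (\<lambda>i. q i + i) [0..<k])" "distinct (map (\<lambda>i. q i + i) [0..<k])"
      using Fk_strict[OF q] by (auto simp: strict_sorted_iff)
    have "map (\<lambda>i. p i + i) [0..<k] = map (\<lambda>i. q i + i) [0..<k]"
      by (rule sorted_distinct_set_unique[OF sp sq]) (use e in simp)
    then have "\<forall>i<k. p i = q i" by (simp add: map_eq_conv)
    moreover have "\<forall>i\<ge>k. p i = q i" using p q by (simp add: Fk_def)
    ultimately show "p = q" by (metis not_le ext)
  qed
  have sub: "?enc ` Fk k \<subseteq> Pow {0..<2*k}"
  proof
    fix S assume "S \<in> ?enc ` Fk k"
    then obtain p where p: "p \<in> Fk k" and S: "S = ?enc p" by blast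
    have pi: "p i \<le> i" for i
    proof (cases "i = 0 \<or> k \<le> i")
      case True then show ?thesis using p unfolding Fk_def by auto
    next
      case False then have "p i < i" using p unfolding Fk_def by simp
      then show ?thesis by simp
    qed
    have "p i + i < 2 * k" if "i < k" for i using pi[of i] that by linarith
    then show "S \<in> Pow {0..<2*k}" using S by auto
  qed
  show "finite (Fk k)"
    by (rule finite_imageD[OF finite_subset[OF sub] inj]) simp
  have "card (Fk k) \<le> card (Pow {0..<2*k})"
    by (rule card_inj_on_le[OF inj sub]) simp
  also have "\<dots> = 4 ^ k" by (simp add: card_Pow power_mult)
  finally show "card (Fk k) \<le> 4 ^ k" .
qed

lemma adj_iff: "(u,v) \<in> adj E \<longleftrightarrow> {u,v} \<in> E"
  by (simp add: adj_def)

lemma conn_map: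
  assumes "(u,v) \<in> (adj E)\<^sup>*"
  shows "(f u, f v) \<in> (adj ((\<lambda>e. f ` e) ` E))\<^sup>*"
  using assms
proof (induction rule: rtrancl_induct)
  case base then show ?case by simp
next
  case (step y z)
  then have "{y,z} \<in> E" by (simp add: adj_iff)
  then have "f ` {y,z} \<in> (\<lambda>e. f ` e) ` E" by blast
  then have "(f y, f z) \<in> adj ((\<lambda>e. f ` e) ` E)" by (simp add: adj_iff)
  with step.IH show ?case by (rule rtrancl_into_rtrancl)
qed

lemma iso_A:
  assumes E: "E \<in> sparse_connected k" and f: "bij_betw f {0..<k} {0..<k}"
  shows "(\<lambda>e. f ` e) ` E \<in> sparse_connected k"
proof -
  let ?E' = "(\<lambda>e. f ` e) ` E"
  have sg: "\<forall>e\<in>E. e \<subseteq> {0..<k} \<and> card e = 2" and con: "graph_connected k E"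
    and cE: "real (card E) \<le> real k - 1 + real k / ln (real k)"
    using E by (auto simp: sparse_connected_def simple_graphs_def)
  have inj: "inj_on f {0..<k}" and im: "f ` {0..<k} = {0..<k}" using f by (auto simp: bij_betw_def)
  have sg': "\<forall>e\<in>?E'. e \<subseteq> {0..<k} \<and> card e = 2"
  proof
    fix e' assume "e' \<in> ?E'"
    then obtain e where e: "e \<in> E" "e' = f ` e" by blast
    have "e \<subseteq> {0..<k}" "card e = 2" using sg e by auto
    moreover have "card (f ` e) = card e"
      by (rule card_image, rule inj_on_subset[OF inj]) (use \<open>e \<subseteq> {0..<k}\<close> in auto)
    ultimately show "e' \<subseteq> {0..<k} \<and> card e' = 2" using e im by auto
  qed
  have "inj_on (\<lambda>e. f ` e) E"
    by (rule inj_on_image, rule inj_on_subset[OF inj]) (use sg in auto)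
  then have cE': "card ?E' = card E" by (rule card_image)
  have con': "graph_connected k ?E'"
    unfolding graph_connected_def
  proof (intro ballI)
    fix u v assume u: "u \<in> {0..<k}" and v: "v \<in> {0..<k}"
    let ?h = "inv_into {0..<k} f"
    have u': "u \<in> f ` {0..<k}" and v': "v \<in> f ` {0..<k}" using u v im by auto
    have hu: "?h u \<in> {0..<k}" "f (?h u) = u" using inv_into_into[OF u'] f_inv_into_f[OF u'] by auto
    have hv: "?h v \<in> {0..<k}" "f (?h v) = v" using inv_into_into[OF v'] f_inv_into_f[OF v'] by auto
    have "(?h u, ?h v) \<in> (adj E)\<^sup>*" using con hu hv unfolding graph_connected_def by blast
    from conn_map[OF this, of f] show "(u, v) \<in> (adj ?E')\<^sup>*" using hu hv by simp
  qed
  show ?thesis using sg' con' cE cE' by (simp add: sparse_connected_def simple_graphs_def)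
qed

definition isor :: "nat \<Rightarrow> (nat set set \<times> nat set set) set" where
  "isor k = {(E, E'). E \<in> sparse_connected k \<and> E' \<in> sparse_connected k \<and> graph_iso k E E'}"

lemma isor_equiv: "equiv (sparse_connected k) (isor k)"
proof -
  have edges: "e \<subseteq> {0..<k}" if "E \<in> sparse_connected k" "e \<in> E" for E e
    using that by (auto simp: sparse_connected_def simple_graphs_def)
  have rf: "graph_iso k E E" for E
    unfolding graph_iso_def by (rule exI[of _ id]) simp
  have sy: "graph_iso k E' E" if a1: "E \<in> sparse_connected k" and a2: "graph_iso k E E'" for E E'
  proof -
    obtain f where f: "bij_betw f {0..<k} {0..<k}" and E': "E' = (\<lambda>e. f ` e) ` E"
      using a2 unfolding graph_iso_def by blast
    let ?h = "inv_into {0..<k} f"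
    have inj: "inj_on f {0..<k}" using f by (simp add: bij_betw_def)
    have "(\<lambda>e. ?h ` e) ` E' = (\<lambda>e. ?h ` f ` e) ` E" unfolding E' by (simp add: image_image)
    also have "\<dots> = (\<lambda>e. e) ` E"
      by (rule image_cong[OF refl]) (use inj edges[OF a1] in simp)
    finally have "E = (\<lambda>e. ?h ` e) ` E'" by simp
    then show ?thesis unfolding graph_iso_def using bij_betw_inv_into[OF f] by blast
  qed
  have tr: "graph_iso k E E''" if b1: "graph_iso k E E'" and b2: "graph_iso k E' E''" for E E' E''
  proof -
    obtain f where f: "bij_betw f {0..<k} {0..<k}" and E': "E' = (\<lambda>e. f ` e) ` E"
      using b1 unfolding graph_iso_def by blast
    obtain g where g: "bij_betw g {0..<k} {0..<k}" and E'': "E'' = (\<lambda>e. g ` e) ` E'"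
      using b2 unfolding graph_iso_def by blast
    have "E'' = (\<lambda>e. (g \<circ> f) ` e) ` E" unfolding E'' E' by (simp add: image_image image_comp)
    then show ?thesis unfolding graph_iso_def using bij_betw_trans[OF f g] by blast
  qed
  show ?thesis
    unfolding equiv_def refl_on_def sym_def trans_def isor_def
    using rf sy tr by blast
qed

definition bfs_inv :: "nat \<Rightarrow> nat set set \<Rightarrow> nat list \<Rightarrow> (nat \<Rightarrow> nat) \<Rightarrow> bool" where
  "bfs_inv k E xs p \<longleftrightarrow> distinct xs \<and> set xs \<subseteq> {0..<k} \<and> p 0 = 0 \<and> (\<forall>i. length xs \<le> i \<longrightarrow> p i = 0)
    \<and> (\<forall>i. 1 \<le> i \<longrightarrow> i < length xs \<longrightarrow> p i < i \<and> {xs!i, xs!(p i)} \<in> E)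
    \<and> (\<forall>i j. i \<le> j \<longrightarrow> j < length xs \<longrightarrow> p i \<le> p j)
    \<and> (\<forall>u j. u < k \<longrightarrow> u \<notin> set xs \<longrightarrow> j < length xs \<longrightarrow> {u, xs!j} \<in> E \<longrightarrow> p (length xs - 1) \<le> j)"

lemma bfs_step:
  assumes inv: "bfs_inv k E xs p" and sg: "E \<in> simple_graphs k" and con: "graph_connected k E"
    and n1: "1 \<le> length xs" and nk: "length xs < k"
  shows "\<exists>xs' p'. bfs_inv k E xs' p' \<and> length xs' = Suc (length xs)"
proof -
  define n where "n = length xs"
  have dist: "distinct xs" and sub: "set xs \<subseteq> {0..<k}" and p0: "p 0 = 0"
    and pz: "\<forall>i. n \<le> i \<longrightarrow> p i = 0"
    and par: "\<forall>i. 1 \<le> i \<longrightarrow> i < n \<longrightarrow> p i < i \<and> {xs!i, xs!(p i)} \<in> E"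
    and mono: "\<forall>i j. i \<le> j \<longrightarrow> j < n \<longrightarrow> p i \<le> p j"
    and last: "\<forall>u j. u < k \<longrightarrow> u \<notin> set xs \<longrightarrow> j < n \<longrightarrow> {u, xs!j} \<in> E \<longrightarrow> p (n - 1) \<le> j"
    using inv unfolding bfs_inv_def n_def by auto
  have "card (set xs) = n" using dist by (simp add: distinct_card n_def)
  then have ne: "set xs \<noteq> {0..<k}" using nk n_def by auto
  have "{0..<k} - set xs \<noteq> {}" using sub ne by blast
  then obtain w where "w \<in> {0..<k} - set xs" by blast
  then have w: "w < k" "w \<notin> set xs" by auto
  have x00: "xs ! 0 \<in> set xs" using n1 by (cases xs) auto
  have x0: "xs ! 0 \<in> set xs" "xs ! 0 < k" using x00 sub by auto
  have "(xs ! 0, w) \<in> (adj E)\<^sup>*" using con x0 w unfolding graph_connected_def by auto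
  then obtain x y where xy: "(x,y) \<in> adj E" "x \<in> set xs" "y \<notin> set xs"
    using boundary[of "xs!0" w "adj E" "set xs"] x0 w by blast
  have xyE: "{x,y} \<in> E" using xy by (simp add: adj_def)
  then have "y < k" using sg unfolding simple_graphs_def by auto
  obtain j0 where j0: "j0 < n" "xs ! j0 = x" using xy(2) by (auto simp: in_set_conv_nth n_def)
  define Q where "Q j \<longleftrightarrow> j < n \<and> (\<exists>u. u < k \<and> u \<notin> set xs \<and> {u, xs!j} \<in> E)" for j
  have "Q j0" unfolding Q_def using j0 \<open>y < k\<close> xy(3) xyE by (auto simp: insert_commute)
  define m where "m = (LEAST j. Q j)"
  have Qm: "Q m" unfolding m_def by (rule LeastI[of Q j0, OF \<open>Q j0\<close>])
  have mle: "Q j \<Longrightarrow> m \<le> j" for j unfolding m_def by (rule Least_le)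
  obtain u where u: "u < k" "u \<notin> set xs" "{u, xs!m} \<in> E" and mn: "m < n" using Qm unfolding Q_def by blast
  have pm: "p (n - 1) \<le> m" using last u mn by blast
  define xs' where "xs' = xs @ [u]"
  define p' where "p' = p(n := m)"
  have len: "length xs' = Suc n" by (simp add: xs'_def n_def)
  have nth_old: "i < n \<Longrightarrow> xs' ! i = xs ! i" for i by (simp add: xs'_def nth_append n_def)
  have nth_new: "xs' ! n = u" by (simp add: xs'_def nth_append n_def)
  have n0: "n \<noteq> 0" using n1 unfolding n_def by linarith
  have A1: "distinct xs'" "set xs' \<subseteq> {0..<k}" using dist sub u by (auto simp: xs'_def)
  have A2: "p' 0 = 0" using p0 n0 by (simp add: p'_def)
  have A3: "\<forall>i. length xs' \<le> i \<longrightarrow> p' i = 0" using pz len by (simp add: p'_def)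
  have A4: "\<forall>i. 1 \<le> i \<longrightarrow> i < length xs' \<longrightarrow> p' i < i \<and> {xs'!i, xs'!(p' i)} \<in> E"
  proof (intro allI impI)
    fix i assume i: "1 \<le> i" "i < length xs'"
    show "p' i < i \<and> {xs'!i, xs'!(p' i)} \<in> E"
    proof (cases "i = n")
      case True then show ?thesis using mn u nth_new nth_old[OF mn] by (simp add: p'_def)
    next
      case False
      then have "i < n" using i len by simp
      moreover have "p i < i" "{xs!i, xs!(p i)} \<in> E" using par i \<open>i < n\<close> by auto
      ultimately show ?thesis using False nth_old[of i] nth_old[of "p i"] by (simp add: p'_def)
    qed
  qed
  have A5: "\<forall>i j. i \<le> j \<longrightarrow> j < length xs' \<longrightarrow> p' i \<le> p' j"
  proof (intro allI impI)
    fix i j assume ij: "i \<le> j" "j < length xs'"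
    show "p' i \<le> p' j"
    proof (cases "j = n")
      case True
      show ?thesis
      proof (cases "i = n")
        case True with \<open>j = n\<close> show ?thesis by simp
      next
        case False
        then have "i \<le> n - 1" "n - 1 < n" using ij True n0 by auto
        then have "p i \<le> p (n - 1)" using mono by blast
        then show ?thesis using pm False True by (simp add: p'_def)
      qed
    next
      case False
      then have "j < n" "i \<noteq> n" using ij len by auto
      then show ?thesis using mono ij False by (simp add: p'_def)
    qed
  qed
  have A6: "\<forall>v j. v < k \<longrightarrow> v \<notin> set xs' \<longrightarrow> j < length xs' \<longrightarrow> {v, xs'!j} \<in> E \<longrightarrow> p' (length xs' - 1) \<le> j"
  proof (intro allI impI)
    fix v j assume v: "v < k" "v \<notin> set xs'" and j: "j < length xs'" and e: "{v, xs'!j} \<in> E"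
    have "p' (length xs' - 1) = m" using len by (simp add: p'_def)
    moreover have "m \<le> j"
    proof (cases "j = n")
      case True then show ?thesis using mn by simp
    next
      case False
      then have "j < n" using j len by simp
      then have "Q j" unfolding Q_def using v e nth_old[of j] by (auto simp: xs'_def)
      then show ?thesis by (rule mle)
    qed
    ultimately show "p' (length xs' - 1) \<le> j" by simp
  qed
  have "bfs_inv k E xs' p'" unfolding bfs_inv_def using A1 A2 A3 A4 A5 A6 by blast
  then show ?thesis using len n_def by blast
qed

lemma bfs_exists:
  assumes sg: "E \<in> simple_graphs k" and con: "graph_connected k E" and k: "k \<ge> 1"
  shows "1 \<le> n \<Longrightarrow> n \<le> k \<Longrightarrow> \<exists>xs p. bfs_inv k E xs p \<and> length xs = n"
proof (induction n)
  case 0 then show ?case by simp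
next
  case (Suc n)
  show ?case
  proof (cases "n = 0")
    case True
    have "bfs_inv k E [0] (\<lambda>_. 0)" unfolding bfs_inv_def using k by auto
    then show ?thesis using True by fastforce
  next
    case False
    then obtain xs p where "bfs_inv k E xs p" "length xs = n" using Suc by auto
    then show ?thesis using bfs_step[of k E xs p] sg con False Suc.prems by auto
  qed
qed

lemma bfs:
  assumes sg: "E \<in> simple_graphs k" and con: "graph_connected k E" and k: "k \<ge> 1"
  shows "\<exists>g p. bij_betw g {0..<k} {0..<k} \<and> p \<in> Fk k \<and> (\<forall>i. 1 \<le> i \<longrightarrow> i < k \<longrightarrow> {g i, g (p i)} \<in> E)"
proof -
  obtain xs p where inv: "bfs_inv k E xs p" and len: "length xs = k"
    using bfs_exists[OF sg con k, of k] k by auto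
  have dist: "distinct xs" and sub: "set xs \<subseteq> {0..<k}" using inv unfolding bfs_inv_def by auto
  have "card (set xs) = card {0..<k}" using dist len by (simp add: distinct_card)
  then have setx: "set xs = {0..<k}" using sub by (simp add: card_subset_eq)
  have "bij_betw (nth xs) {0..<k} {0..<k}"
    unfolding bij_betw_def
  proof
    show "inj_on (nth xs) {0..<k}" using dist len by (auto simp: inj_on_def nth_eq_iff_index_eq)
    have "nth xs ` {0..<k} = set xs" using len by (auto simp: in_set_conv_nth image_def) (use atLeastLessThan_iff in blast)
    then show "nth xs ` {0..<k} = {0..<k}" using setx by simp
  qed
  moreover have "p \<in> Fk k" using inv len unfolding bfs_inv_def Fk_def by auto
  moreover have "\<forall>i. 1 \<le> i \<longrightarrow> i < k \<longrightarrow> {xs ! i, xs ! (p i)} \<in> E" using inv len unfolding bfs_inv_def by auto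
  ultimately show ?thesis by blast
qed


lemma final_arith:
  assumes "k \<ge> (1::nat)"
  shows "2 * 36 ^ k < (100::nat) ^ k"
proof -
  obtain j where j: "k = Suc j" using assms by (cases k) auto
  have "(36::nat) ^ j \<le> 100 ^ j" by (rule power_mono) simp_all
  moreover have "(0::nat) < 100 ^ j" by simp
  ultimately have "2 * (36 * 36 ^ j) < (100::nat) * 100 ^ j" by linarith
  then show ?thesis unfolding j by simp
qed

theorem mainTheorem6:
  fixes k :: nat
  assumes "k \<ge> 1"
  shows "num_unlabeled_sparse_connected k < 100 ^ k"
proof -
  let ?A = "sparse_connected k"
  let ?R = "isor k"
  define s where "s = nat \<lfloor>real k / ln (real k)\<rfloor>"
  define tre where "tre p = (\<lambda>i. {i, p i}) ` {1..<k}" for p :: "nat \<Rightarrow> nat"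
  define Xs where "Xs = {X. X \<subseteq> Pairs k \<and> card X \<le> s}"
  define \<Phi> where "\<Phi> = (\<lambda>(p, X). ?R `` {tre p \<union> X})"
  have k2: "k \<ge> 2 \<or> s = 0"
  proof (cases "k = 1")
    case True then show ?thesis by (simp add: s_def)
  qed (use assms in simp)
  have eqv: "equiv ?A ?R" by (rule isor_equiv)
  have cover: "?A // ?R \<subseteq> \<Phi> ` (Fk k \<times> Xs)"
  proof
    fix C assume "C \<in> ?A // ?R"
    then obtain E where E: "E \<in> ?A" and C: "C = ?R `` {E}" by (auto elim: quotientE)
    have sgE: "E \<in> simple_graphs k" and conE: "graph_connected k E"
      using E by (auto simp: sparse_connected_def)
    obtain g p where g: "bij_betw g {0..<k} {0..<k}" and p: "p \<in> Fk k"
      and gp: "\<forall>i. 1 \<le> i \<longrightarrow> i < k \<longrightarrow> {g i, g (p i)} \<in> E"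
      using bfs[OF sgE conE assms] by blast
    define f where "f = inv_into {0..<k} g"
    have f: "bij_betw f {0..<k} {0..<k}" unfolding f_def by (rule bij_betw_inv_into[OF g])
    have injg: "inj_on g {0..<k}" using g by (simp add: bij_betw_def)
    define E' where "E' = (\<lambda>e. f ` e) ` E"
    have E'A: "E' \<in> ?A" unfolding E'_def by (rule iso_A[OF E f])
    have EE': "(E, E') \<in> ?R" unfolding isor_def graph_iso_def using E E'A f E'_def by blast
    have treE': "tre p \<subseteq> E'"
    proof
      fix e assume "e \<in> tre p"
      then obtain i where i: "1 \<le> i" "i < k" and e: "e = {i, p i}" unfolding tre_def by auto
      have pi: "p i < i" using p i unfolding Fk_def by auto
      have "f ` {g i, g (p i)} = {f (g i), f (g (p i))}" by simp
      also have "\<dots> = {i, p i}" unfolding f_def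
        using inv_into_f_f[OF injg, of i] inv_into_f_f[OF injg, of "p i"] i pi by simp
      finally have "{i, p i} = f ` {g i, g (p i)}" by simp
      moreover have "{g i, g (p i)} \<in> E" using gp i by blast
      ultimately show "e \<in> E'" unfolding E'_def e by blast
    qed
    define X where "X = E' - tre p"
    have E'eq: "E' = tre p \<union> X" using treE' unfolding X_def by blast
    have E'P: "E' \<subseteq> Pairs k" using E'A by (auto simp: sparse_connected_def simple_graphs_def Pairs_def)
    have finE': "finite E'" using E'P Pairs_card(2) by (rule finite_subset)
    have XP: "X \<subseteq> Pairs k" using E'P unfolding X_def by blast
    have injt: "inj_on (\<lambda>i. {i, p i}) {1..<k}"
    proof (rule inj_onI)
      fix i j assume i: "i \<in> {1..<k}" and j: "j \<in> {1..<k}" and eq: "{i, p i} = {j, p j}"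
      have "p i < i" "p j < j" using p i j unfolding Fk_def by auto
      then show "i = j" using eq by (metis doubleton_eq_iff less_asym)
    qed
    have ct: "card (tre p) = k - 1" unfolding tre_def using card_image[OF injt] by simp
    have finT: "finite (tre p)" unfolding tre_def by simp
    have cX: "card X = card E' - (k - 1)" unfolding X_def using card_Diff_subset[OF finT treE'] ct by simp
    have cE'le: "card E' \<ge> k - 1" using card_mono[OF finE' treE'] ct by simp
    have "real (card E') \<le> real k - 1 + real k / ln (real k)"
      using E'A by (simp add: sparse_connected_def)
    then have rX: "real (card X) \<le> real k / ln (real k)" using cX cE'le assms by (simp add: of_nat_diff)
    then have "int (card X) \<le> \<lfloor>real k / ln (real k)\<rfloor>" by (simp add: le_floor_iff)
    then have "card X \<le> s" unfolding s_def by linarith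
    then have "X \<in> Xs" using XP unfolding Xs_def by blast
    have "C = ?R `` {E'}" unfolding C using equiv_class_eq[OF eqv EE'] .
    then have "C = \<Phi> (p, X)" unfolding \<Phi>_def using E'eq by simp
    then show "C \<in> \<Phi> ` (Fk k \<times> Xs)" using p \<open>X \<in> Xs\<close> by blast
  qed
  have finF: "finite (Fk k)" by (rule Fk_card(2))
  have finX: "finite Xs" unfolding Xs_def by (rule Xs_card(2)[OF k2])
  have "card (?A // ?R) \<le> card (\<Phi> ` (Fk k \<times> Xs))"
    by (rule card_mono[OF _ cover]) (use finF finX in simp)
  also have "\<dots> \<le> card (Fk k \<times> Xs)" by (rule card_image_le) (use finF finX in simp)
  also have "\<dots> = card (Fk k) * card Xs" by (rule card_cartesian_product)
  also have "\<dots> \<le> 4 ^ k * (2 * (k^2)^s)"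
    by (rule mult_le_mono[OF Fk_card(1)]) (unfold Xs_def, rule Xs_card(1)[OF k2])
  finally have bound: "card (?A // ?R) \<le> 4 ^ k * (2 * (k^2)^s)" .
  have kpos: "real k > 0" using assms by simp
  have sle: "real s * ln (real k) \<le> real k"
  proof -
    have lnk: "ln (real k) \<ge> 0" using assms by simp
    have q: "real k / ln (real k) \<ge> 0" using lnk by simp
    have "real s = of_int \<lfloor>real k / ln (real k)\<rfloor>" unfolding s_def using q by simp
    also have "\<dots> \<le> real k / ln (real k)" by (rule of_int_floor_le)
    finally have "real s \<le> real k / ln (real k)" .
    then have "real s * ln (real k) \<le> real k / ln (real k) * ln (real k)"
      by (rule mult_right_mono[OF _ lnk])
    also have "\<dots> \<le> real k" using kpos by (cases "ln (real k) = 0") auto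
    finally show ?thesis .
  qed
  have "real ((k^2)^s) = exp (ln (real k)) ^ (2 * s)" using kpos by (simp add: power_mult)
  also have "\<dots> = exp (real (2 * s) * ln (real k))" by (rule exp_of_nat_mult[symmetric])
  also have "\<dots> \<le> exp (real (2 * k) * 1)" using sle by simp
  also have "\<dots> = exp 1 ^ (2 * k)" by (rule exp_of_nat_mult)
  also have "\<dots> \<le> 3 ^ (2 * k)" by (rule power_mono[OF exp_le]) simp
  also have "\<dots> = 9 ^ k" by (simp add: power_mult)
  finally have "real ((k^2)^s) \<le> 9 ^ k" .
  then have "(k^2)^s \<le> 9 ^ k" by (metis of_nat_le_iff of_nat_numeral of_nat_power)
  then have "card (?A // ?R) \<le> 4 ^ k * (2 * 9 ^ k)" using bound
    by (meson le_trans mult_le_mono order_refl)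
  also have "\<dots> = 2 * 36 ^ k" by (simp add: power_mult_distrib[symmetric])
  also have "\<dots> < 100 ^ k" by (rule final_arith[OF assms])
  finally have "card (?A // ?R) < 100 ^ k" .
  then show ?thesis unfolding num_unlabeled_sparse_connected_def isor_def .
qed

end
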